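(* For any unit square graph $G$, if $\mathcal{B}=\{N[v]\mid v\in V(G)\}$, then NCTD$^+(\mathcal{B})\le 4$.
   Context: A unit square graph is the intersection graph of a finite family of axis-parallel unit squares in the plane. $N[v]$ is the closed neighborhood of $v$. A positive teaching map for $\mathcal{B}$ assigns to each $B\in\mathcal{B}$ a set $T(B)\subseteq B$. A vertex $w$ distinguishes $B,B'$ if $w$ lies in exactly one of them. $T$ is non-clashing if for all distinct $B,B'\in\mathcal{B}$ some $w\in T(B)\cup T(B')$ distinguishes them; its size is $\max_{B\in\mathcal{B}}|T(B)|$. NCTD$^+(\mathcal{B})$ is the minimum size of a positive non-clashing teaching map for $\mathcal{B}$. *)

theory Defs
  imports Main "HOL-Analysis.Analysis"
begin

definition unit_square :: "real \<times> real \<Rightarrow> (real \<times> real) set" where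
  "unit_square c = {p. fst c \<le> fst p \<and> fst p \<le> fst c + 1 \<and> snd c \<le> snd p \<and> snd p \<le> snd c + 1}"

definition usq_adj :: "('v \<Rightarrow> real \<times> real) \<Rightarrow> 'v \<Rightarrow> 'v \<Rightarrow> bool" where
  "usq_adj c u v \<longleftrightarrow> u \<noteq> v \<and> unit_square (c u) \<inter> unit_square (c v) \<noteq> {}"

definition closed_nbhd :: "'v set \<Rightarrow> ('v \<Rightarrow> 'v \<Rightarrow> bool) \<Rightarrow> 'v \<Rightarrow> 'v set" where
  "closed_nbhd V E v = {u \<in> V. u = v \<or> E v u}"

definition distinguishes :: "'v \<Rightarrow> 'v set \<Rightarrow> 'v set \<Rightarrow> bool" where
  "distinguishes w B B' \<longleftrightarrow> (w \<in> B) \<noteq> (w \<in> B')"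

definition positive_teaching_map :: "'v set set \<Rightarrow> ('v set \<Rightarrow> 'v set) \<Rightarrow> bool" where
  "positive_teaching_map \<B> T \<longleftrightarrow> (\<forall>B\<in>\<B>. T B \<subseteq> B)"

definition non_clashing :: "'v set set \<Rightarrow> ('v set \<Rightarrow> 'v set) \<Rightarrow> bool" where
  "non_clashing \<B> T \<longleftrightarrow>
     (\<forall>B\<in>\<B>. \<forall>B'\<in>\<B>. B \<noteq> B' \<longrightarrow> (\<exists>w \<in> T B \<union> T B'. distinguishes w B B'))"

definition teaching_size_le :: "'v set set \<Rightarrow> ('v set \<Rightarrow> 'v set) \<Rightarrow> nat \<Rightarrow> bool" where
  "teaching_size_le \<B> T k \<longleftrightarrow> (\<forall>B\<in>\<B>. finite (T B) \<and> card (T B) \<le> k)"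

definition NCTD_plus :: "'v set set \<Rightarrow> nat" where
  "NCTD_plus \<B> = (LEAST k. \<exists>T. positive_teaching_map \<B> T \<and> non_clashing \<B> T \<and> teaching_size_le \<B> T k)"

end

theory Submission
  imports Defs
begin

definition okn :: "('v \<Rightarrow> real \<times> real) \<Rightarrow> 'v \<Rightarrow> 'v \<Rightarrow> bool" where
  "okn c v u \<longleftrightarrow> \<bar>fst (c u) - fst (c v)\<bar> \<le> 1 \<and> \<bar>snd (c u) - snd (c v)\<bar> \<le> 1"

lemma sq_int_iff:
  "unit_square a \<inter> unit_square b \<noteq> {} \<longleftrightarrow>
   \<bar>fst a - fst b\<bar> \<le> 1 \<and> \<bar>snd a - snd b\<bar> \<le> 1"
proof
  assume "unit_square a \<inter> unit_square b \<noteq> {}"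
  then obtain p where "p \<in> unit_square a" "p \<in> unit_square b" by blast
  then show "\<bar>fst a - fst b\<bar> \<le> 1 \<and> \<bar>snd a - snd b\<bar> \<le> 1"
    unfolding unit_square_def by auto
next
  assume h: "\<bar>fst a - fst b\<bar> \<le> 1 \<and> \<bar>snd a - snd b\<bar> \<le> 1"
  have "(max (fst a) (fst b), max (snd a) (snd b)) \<in> unit_square a \<inter> unit_square b"
    using h unfolding unit_square_def by (auto simp: abs_le_iff)
  then show "unit_square a \<inter> unit_square b \<noteq> {}" by blast
qed

lemma mem_nbhd:
  "u \<in> closed_nbhd V (usq_adj c) v \<longleftrightarrow> u \<in> V \<and> okn c v u"
  unfolding closed_nbhd_def usq_adj_def okn_def sq_int_iff by auto

definition ext :: "('v \<Rightarrow> real) \<Rightarrow> 'v set \<Rightarrow> 'v" where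
  "ext f B = (SOME w. w \<in> B \<and> (\<forall>z\<in>B. f z \<le> f w))"

lemma ext_ex:
  fixes f :: "'v \<Rightarrow> real"
  assumes "finite B" "B \<noteq> {}"
  shows "\<exists>w. w \<in> B \<and> (\<forall>z\<in>B. f z \<le> f w)"
proof -
  have "Max (f ` B) \<in> f ` B" using assms by simp
  then obtain w where "w \<in> B" "f w = Max (f ` B)" by auto
  moreover have "\<forall>z\<in>B. f z \<le> Max (f ` B)" using assms by simp
  ultimately show ?thesis by auto
qed

lemma ext_prop:
  assumes "finite B" "B \<noteq> {}"
  shows "ext f B \<in> B \<and> (\<forall>z\<in>B. f z \<le> f (ext f B))"
  unfolding ext_def using someI_ex[OF ext_ex[OF assms]] .

definition TT :: "('v \<Rightarrow> real \<times> real) \<Rightarrow> 'v set \<Rightarrow> 'v set" where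
  "TT c B = {ext (\<lambda>w. fst (c w)) B, ext (\<lambda>w. - fst (c w)) B,
             ext (\<lambda>w. snd (c w)) B, ext (\<lambda>w. - snd (c w)) B}"

lemma card4: "card {a, b, d, e} \<le> 4"
proof -
  have "card {a,b,d,e} \<le> Suc (card {b,d,e})" by (rule card_insert_le_m1) auto
  moreover have "card {b,d,e} \<le> Suc (card {d,e})" by (rule card_insert_le_m1) auto
  moreover have "card {d,e} \<le> Suc (card {e})" by (rule card_insert_le_m1) auto
  ultimately show ?thesis by simp
qed

lemma key:
  assumes fin: "finite V" and uV: "u \<in> V"
    and wB: "w \<in> closed_nbhd V (usq_adj c) u"
    and wB': "w \<notin> closed_nbhd V (usq_adj c) v"
  shows "\<exists>t \<in> TT c (closed_nbhd V (usq_adj c) u). t \<notin> closed_nbhd V (usq_adj c) v"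
proof -
  let ?B = "closed_nbhd V (usq_adj c) u"
  have finB: "finite ?B" using fin unfolding closed_nbhd_def by simp
  have neB: "?B \<noteq> {}" using wB by auto
  have wV: "w \<in> V" and nok: "\<not> okn c v w" using wB wB' mem_nbhd by metis+
  note P = ext_prop[OF finB neB]
  consider "fst (c w) > fst (c v) + 1" | "fst (c w) < fst (c v) - 1"
    | "snd (c w) > snd (c v) + 1" | "snd (c w) < snd (c v) - 1"
    using nok unfolding okn_def by linarith
  then show ?thesis
  proof cases
    case 1
    let ?t = "ext (\<lambda>w. fst (c w)) ?B"
    have "?t \<in> ?B" "fst (c w) \<le> fst (c ?t)" using P[of "\<lambda>w. fst (c w)"] wB by auto
    moreover have "?t \<notin> closed_nbhd V (usq_adj c) v"
      using calculation 1 unfolding mem_nbhd okn_def by auto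
    ultimately show ?thesis unfolding TT_def by auto
  next
    case 2
    let ?t = "ext (\<lambda>w. - fst (c w)) ?B"
    have "?t \<in> ?B" "- fst (c w) \<le> - fst (c ?t)" using P[of "\<lambda>w. - fst (c w)"] wB by auto
    moreover have "?t \<notin> closed_nbhd V (usq_adj c) v"
      using calculation 2 unfolding mem_nbhd okn_def by auto
    ultimately show ?thesis unfolding TT_def by auto
  next
    case 3
    let ?t = "ext (\<lambda>w. snd (c w)) ?B"
    have "?t \<in> ?B" "snd (c w) \<le> snd (c ?t)" using P[of "\<lambda>w. snd (c w)"] wB by auto
    moreover have "?t \<notin> closed_nbhd V (usq_adj c) v"
      using calculation 3 unfolding mem_nbhd okn_def by auto
    ultimately show ?thesis unfolding TT_def by auto
  next
    case 4
    let ?t = "ext (\<lambda>w. - snd (c w)) ?B"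
    have "?t \<in> ?B" "- snd (c w) \<le> - snd (c ?t)" using P[of "\<lambda>w. - snd (c w)"] wB by auto
    moreover have "?t \<notin> closed_nbhd V (usq_adj c) v"
      using calculation 4 unfolding mem_nbhd okn_def by auto
    ultimately show ?thesis unfolding TT_def by auto
  qed
qed

theorem theorem8:
  fixes V :: "'v set" and c :: "'v \<Rightarrow> real \<times> real"
  assumes "finite V"
  shows "NCTD_plus ((\<lambda>v. closed_nbhd V (usq_adj c) v) ` V) \<le> 4"
proof -
  let ?F = "(\<lambda>v. closed_nbhd V (usq_adj c) v) ` V"
  have sub: "TT c B \<subseteq> B" if hB: "B \<in> ?F" for B
  proof -
    obtain u where u: "u \<in> V" "B = closed_nbhd V (usq_adj c) u" using hB by auto
    have "finite B" using assms u unfolding closed_nbhd_def by simp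
    moreover have "u \<in> B" using u by (simp add: mem_nbhd okn_def)
    ultimately show ?thesis unfolding TT_def using ext_prop[of B] by blast
  qed
  have pos: "positive_teaching_map ?F (TT c)"
    unfolding positive_teaching_map_def using sub by blast
  have nc: "non_clashing ?F (TT c)"
    unfolding non_clashing_def
  proof (intro ballI impI)
    fix B B' assume B: "B \<in> ?F" and B': "B' \<in> ?F" and ne: "B \<noteq> B'"
    obtain u where u: "u \<in> V" "B = closed_nbhd V (usq_adj c) u" using B by auto
    obtain v where v: "v \<in> V" "B' = closed_nbhd V (usq_adj c) v" using B' by auto
    from ne obtain w where "(w \<in> B \<and> w \<notin> B') \<or> (w \<in> B' \<and> w \<notin> B)" by blast
    then show "\<exists>w\<in>TT c B \<union> TT c B'. distinguishes w B B'"
    proof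
      assume "w \<in> B \<and> w \<notin> B'"
      then obtain t where "t \<in> TT c B" "t \<notin> B'" using key[OF assms u(1)] u v by blast
      moreover have "t \<in> B" using sub[OF B] calculation by blast
      ultimately show ?thesis unfolding distinguishes_def by blast
    next
      assume "w \<in> B' \<and> w \<notin> B"
      then obtain t where "t \<in> TT c B'" "t \<notin> B" using key[OF assms v(1)] u v by blast
      moreover have "t \<in> B'" using sub[OF B'] calculation by blast
      ultimately show ?thesis unfolding distinguishes_def by blast
    qed
  qed
  have sz: "teaching_size_le ?F (TT c) 4"
    unfolding teaching_size_le_def TT_def using card4 by auto
  show ?thesis unfolding NCTD_plus_def
    by (rule Least_le) (use pos nc sz in blast)
qed

end
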